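(* Let $q\ge 2$ and $n,l\ge1$. For every IDF code over $l$ blocks for $\Pi^q_n$ (with stochastic or deterministic encoder and deterministic decoding sets) with $M\ge 2^{q^{nl}}$ messages, the type-I and type-II error probabilities satisfy $\lambda_1+\lambda_2\ge1$.
   Context: Fix an integer $q\ge 2$, $\mathcal A_q=\{1,\dots,q\}$. For $n\ge1$ and $\sigma\in S_n$, $\sigma\mathbf x=(x_{\sigma^{-1}(1)},\dots,x_{\sigma^{-1}(n)})$ for $\mathbf x\in\mathcal A_q^n$; the $n$-block $q$-ary uniform permutation channel $\Pi^q_n$ has input/output alphabet $\mathcal A_q^n$ and $\Pi^q_n(\mathbf y\mid\mathbf x)=\frac1{n!}\sum_{\sigma\in S_n}\mathbf 1\{\mathbf y=\sigma\mathbf x\}$. An identification-feedback (IDF) code over $l$ blocks with $M$ messages for $\Pi^q_n$ (with block-wise noiseless feedback) is a family $\{(\mathbb Q_{i,1},\dots,\mathbb Q_{i,l},\mathcal D_i)\}_{i=1}^M$ where $\mathbb Q_{i,j}(\mathbf x^{(j)}\mid \mathbf y^{(1)},\dots,\mathbf y^{(j-1)},\mathbf x^{(1)},\dots,\mathbf x^{(j-1)})$ is a conditional probability distribution on $\mathcal A_q^n$ given the previous output blocks (fed back) and previous input blocks, and $\mathcal D_i\subseteq(\mathcal A_q^n)^l$. When message $i$ is sent, the blocks have joint law $\mathbb P^{(i)}(\underline{\mathbf x},\underline{\mathbf y})=\prod_{j=1}^l\mathbb Q_{i,j}(\mathbf x^{(j)}\mid\mathbf y^{(1)},\dots,\mathbf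 y^{(j-1)},\mathbf x^{(1)},\dots,\mathbf x^{(j-1)})\,\Pi^q_n(\mathbf y^{(j)}\mid\mathbf x^{(j)})$. The code is deterministic if each $\mathbb Q_{i,j}$ is a point mass given by a function $\mathbf f_{i,j}$ of the past blocks. Error probabilities: $\lambda_{i\to j}=\mathbb P^{(i)}(\underline{\mathbf y}\in\mathcal D_j)$ for $i\ne j$, $\lambda_{i\not\to i}=\mathbb P^{(i)}(\underline{\mathbf y}\notin\mathcal D_i)$, type-I error $\lambda_1=\max_i\lambda_{i\not\to i}$, type-II error $\lambda_2=\max_{i\neq j}\lambda_{i\to j}$. *)

theory Defs
  imports "HOL-Analysis.Analysis" "HOL-Combinatorics.Permutations"
begin

text \<open>Blocks of length n over the alphabet {1..q}: elements of A_q^n, as lists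
  (position i of the list is coordinate i+1).\<close>
definition blocks :: "nat \<Rightarrow> nat \<Rightarrow> nat list set" where
  "blocks q n = {x. length x = n \<and> set x \<subseteq> {1..q}}"

definition block_seqs :: "nat \<Rightarrow> nat \<Rightarrow> nat \<Rightarrow> nat list list set" where
  "block_seqs q n l = {xs. length xs = l \<and> set xs \<subseteq> blocks q n}"

definition perm_act :: "nat \<Rightarrow> (nat \<Rightarrow> nat) \<Rightarrow> nat list \<Rightarrow> nat list" where
  "perm_act n \<sigma> x = map (\<lambda>i. x ! inv \<sigma> i) [0..<n]"

definition perm_channel :: "nat \<Rightarrow> nat list \<Rightarrow> nat list \<Rightarrow> real" where
  "perm_channel n y x =
     real (card {\<sigma>. \<sigma> permutes {..<n} \<and> y = perm_act n \<sigma> x}) / fact n"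

text \<open>A (stochastic) encoder for one message: Qi j ys xs x is the probability
  of input block x in block j (0-based, j < l) given the previous output blocks ys
  and previous input blocks xs (each a list of length j).\<close>
definition valid_encoder ::
  "nat \<Rightarrow> nat \<Rightarrow> nat \<Rightarrow> (nat \<Rightarrow> nat list list \<Rightarrow> nat list list \<Rightarrow> nat list \<Rightarrow> real) \<Rightarrow> bool" where
  "valid_encoder q n l Qi \<longleftrightarrow>
     (\<forall>j<l. \<forall>ys xs. ys \<in> block_seqs q n j \<and> xs \<in> block_seqs q n j \<longrightarrow>
        (\<forall>x\<in>blocks q n. 0 \<le> Qi j ys xs x) \<and> (\<Sum>x\<in>blocks q n. Qi j ys xs x) = 1)"

definition joint_prob ::
  "nat \<Rightarrow> nat \<Rightarrow> (nat \<Rightarrow> nat list list \<Rightarrow> nat list list \<Rightarrow> nat list \<Rightarrow> real)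
     \<Rightarrow> nat list list \<Rightarrow> nat list list \<Rightarrow> real" where
  "joint_prob n l Qi xs ys =
     (\<Prod>j<l. Qi j (take j ys) (take j xs) (xs ! j) * perm_channel n (ys ! j) (xs ! j))"

definition out_prob ::
  "nat \<Rightarrow> nat \<Rightarrow> nat \<Rightarrow> (nat \<Rightarrow> nat list list \<Rightarrow> nat list list \<Rightarrow> nat list \<Rightarrow> real)
     \<Rightarrow> nat list list set \<Rightarrow> real" where
  "out_prob q n l Qi E =
     (\<Sum>xs\<in>block_seqs q n l. \<Sum>ys\<in>block_seqs q n l \<inter> E. joint_prob n l Qi xs ys)"

definition IDF_code ::
  "nat \<Rightarrow> nat \<Rightarrow> nat \<Rightarrow> nat
     \<Rightarrow> (nat \<Rightarrow> nat \<Rightarrow> nat list list \<Rightarrow> nat list list \<Rightarrow> nat list \<Rightarrow> real)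
     \<Rightarrow> (nat \<Rightarrow> nat list list set) \<Rightarrow> bool" where
  "IDF_code q n l M Q D \<longleftrightarrow>
     (\<forall>i\<in>{1..M}. valid_encoder q n l (Q i) \<and> D i \<subseteq> block_seqs q n l)"

definition type1_error where
  "type1_error q n l M Q D =
     Max ((\<lambda>i. out_prob q n l (Q i) (block_seqs q n l - D i)) ` {1..M})"

definition type2_error where
  "type2_error q n l M Q D =
     Max {out_prob q n l (Q i) (D j) | i j. i \<in> {1..M} \<and> j \<in> {1..M} \<and> i \<noteq> j}"

end

theory Submission
  imports Defs
begin

lemma finite_blocks: "finite (blocks q n)"
proof -
  have "blocks q n = {xs. set xs \<subseteq> {1..q} \<and> length xs = n}" by (auto simp: blocks_def)
  thus ?thesis using finite_lists_length_eq[of "{1..q}" n] by simp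
qed

lemma finite_block_seqs: "finite (block_seqs q n l)"
proof -
  have "block_seqs q n l = {xs. set xs \<subseteq> blocks q n \<and> length xs = l}" by (auto simp: block_seqs_def)
  thus ?thesis using finite_lists_length_eq[OF finite_blocks] by simp
qed

lemma card_block_seqs: "card (block_seqs q n l) = q ^ (n * l)"
proof -
  have "block_seqs q n l = {xs. set xs \<subseteq> blocks q n \<and> length xs = l}" by (auto simp: block_seqs_def)
  moreover have "blocks q n = {xs. set xs \<subseteq> {1..q} \<and> length xs = n}" by (auto simp: blocks_def)
  ultimately show ?thesis using card_lists_length_eq[OF finite_blocks, of q n l]
      card_lists_length_eq[of "{1..q}" n] by (simp add: power_mult)
qed

lemma perm_act_blocks:
  assumes "\<sigma> permutes {..<n}" "x \<in> blocks q n"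
  shows "perm_act n \<sigma> x \<in> blocks q n"
proof -
  have inv_lt: "inv \<sigma> i < n" if "i < n" for i
    using permutes_in_image[OF permutes_inv[OF assms(1)]] that by auto
  moreover have "x ! inv \<sigma> i \<in> {1..q}" if "i < n" for i
  proof -
    have "inv \<sigma> i < length x" using inv_lt[OF that] assms(2) by (simp add: blocks_def)
    hence "x ! inv \<sigma> i \<in> set x" by simp
    thus ?thesis using assms(2) by (auto simp: blocks_def)
  qed
  ultimately show ?thesis using assms(2) unfolding blocks_def perm_act_def
    by (auto simp: subset_iff)
qed

lemma perm_channel_sum:
  assumes "x \<in> blocks q n"
  shows "(\<Sum>y\<in>blocks q n. perm_channel n y x) = 1"
proof -
  let ?P = "{\<sigma>. \<sigma> permutes {..<n}}"
  have finP: "finite ?P" by (rule finite_permutations) simp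
  have "(\<Sum>y\<in>blocks q n. card {\<sigma>\<in>?P. y = perm_act n \<sigma> x}) = (\<Sum>\<sigma>\<in>?P. 1)"
  proof (rule sum_multicount_gen[OF finite_blocks finP], intro ballI)
    fix \<sigma> assume "\<sigma> \<in> ?P"
    hence "{y\<in>blocks q n. y = perm_act n \<sigma> x} = {perm_act n \<sigma> x}"
      using perm_act_blocks assms by auto
    thus "card {y\<in>blocks q n. y = perm_act n \<sigma> x} = 1" by simp
  qed
  also have "\<dots> = fact n" using card_permutations[of "{..<n}" n] by simp
  finally have c0: "(\<Sum>y\<in>blocks q n. card {\<sigma>\<in>?P. y = perm_act n \<sigma> x}) = fact n" .
  have e: "\<And>y. {\<sigma>\<in>?P. y = perm_act n \<sigma> x} = {\<sigma>. \<sigma> permutes {..<n} \<and> y = perm_act n \<sigma> x}"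
    by simp
  have c: "(\<Sum>y\<in>blocks q n. real (card {\<sigma>. \<sigma> permutes {..<n} \<and> y = perm_act n \<sigma> x})) = fact n"
    using arg_cong[OF c0, of real] unfolding e of_nat_sum of_nat_fact .
  show ?thesis unfolding perm_channel_def sum_divide_distrib[symmetric] c by simp
qed

definition PP where
  "PP n Qi k xs ys = (\<Prod>j<k. Qi j (take j ys) (take j xs) (xs ! j) * perm_channel n (ys ! j) (xs ! j))"

lemma PP_snoc:
  assumes "length xs = k" "length ys = k"
  shows "PP n Qi (Suc k) (xs @ [x]) (ys @ [y]) = PP n Qi k xs ys * (Qi k ys xs x * perm_channel n y x)"
  unfolding PP_def prod.lessThan_Suc using assms
  by (auto simp: nth_append intro!: prod.cong)

lemma block_seqs_Suc:
  "block_seqs q n (Suc k) = (\<lambda>(xs,x). xs @ [x]) ` (block_seqs q n k \<times> blocks q n)"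
proof
  show "block_seqs q n (Suc k) \<subseteq> (\<lambda>(xs,x). xs @ [x]) ` (block_seqs q n k \<times> blocks q n)"
  proof
    fix zs assume z: "zs \<in> block_seqs q n (Suc k)"
    hence len: "length zs = Suc k" and st: "set zs \<subseteq> blocks q n" by (auto simp: block_seqs_def)
    obtain xs x where zs: "zs = xs @ [x]" using len by (cases zs rule: rev_cases) auto
    have "xs \<in> block_seqs q n k" using len st unfolding zs block_seqs_def by simp
    moreover have "x \<in> blocks q n" using st unfolding zs by simp
    ultimately have "(xs, x) \<in> block_seqs q n k \<times> blocks q n" by simp
    thus "zs \<in> (\<lambda>(xs,x). xs @ [x]) ` (block_seqs q n k \<times> blocks q n)"
      unfolding zs by (rule rev_image_eqI) simp
  qed
next
  show "(\<lambda>(xs,x). xs @ [x]) ` (block_seqs q n k \<times> blocks q n) \<subseteq> block_seqs q n (Suc k)"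
    by (auto simp: block_seqs_def)
qed

lemma inj_snoc: "inj_on (\<lambda>(xs,x). xs @ [x]) A"
  by (auto simp: inj_on_def)

lemma sum_snoc:
  "(\<Sum>zs\<in>block_seqs q n (Suc k). f zs) = (\<Sum>xs\<in>block_seqs q n k. \<Sum>x\<in>blocks q n. f (xs @ [x]))"
  unfolding block_seqs_Suc
  by (subst sum.reindex[OF inj_snoc]) (simp add: sum.cartesian_product split_def)

lemma total_mass:
  assumes "valid_encoder q n l Qi" "k \<le> l"
  shows "(\<Sum>xs\<in>block_seqs q n k. \<Sum>ys\<in>block_seqs q n k. PP n Qi k xs ys) = 1"
  using assms(2)
proof (induction k)
  case 0
  have "block_seqs q n 0 = {[]}" by (auto simp: block_seqs_def)
  thus ?case by (simp add: PP_def)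
next
  case (Suc k)
  have "(\<Sum>xs\<in>block_seqs q n (Suc k). \<Sum>ys\<in>block_seqs q n (Suc k). PP n Qi (Suc k) xs ys)
     = (\<Sum>xs\<in>block_seqs q n k. \<Sum>x\<in>blocks q n. \<Sum>ys\<in>block_seqs q n k. \<Sum>y\<in>blocks q n.
          PP n Qi k xs ys * (Qi k ys xs x * perm_channel n y x))"
    unfolding sum_snoc
    by (intro sum.cong refl, subst PP_snoc) (auto simp: block_seqs_def)
  also have "\<dots> = (\<Sum>xs\<in>block_seqs q n k. \<Sum>ys\<in>block_seqs q n k. PP n Qi k xs ys *
       (\<Sum>x\<in>blocks q n. Qi k ys xs x * (\<Sum>y\<in>blocks q n. perm_channel n y x)))"
  proof (intro sum.cong refl)
    fix xs
    show "(\<Sum>x\<in>blocks q n. \<Sum>ys\<in>block_seqs q n k. \<Sum>y\<in>blocks q n.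
          PP n Qi k xs ys * (Qi k ys xs x * perm_channel n y x))
      = (\<Sum>ys\<in>block_seqs q n k. PP n Qi k xs ys *
       (\<Sum>x\<in>blocks q n. Qi k ys xs x * (\<Sum>y\<in>blocks q n. perm_channel n y x)))"
      apply (rule trans[OF sum.swap])
      apply (intro sum.cong refl)
      apply (simp only: sum_distrib_left mult.assoc)
      done
  qed
  also have "\<dots> = (\<Sum>xs\<in>block_seqs q n k. \<Sum>ys\<in>block_seqs q n k. PP n Qi k xs ys)"
  proof (intro sum.cong refl)
    fix xs ys assume h: "xs \<in> block_seqs q n k" "ys \<in> block_seqs q n k"
    have kl: "k < l" using Suc by simp
    have "\<forall>j<l. \<forall>ys xs. ys \<in> block_seqs q n j \<and> xs \<in> block_seqs q n j \<longrightarrow>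
        (\<forall>x\<in>blocks q n. 0 \<le> Qi j ys xs x) \<and> (\<Sum>x\<in>blocks q n. Qi j ys xs x) = 1"
      using assms(1) unfolding valid_encoder_def .
    hence "(\<Sum>x\<in>blocks q n. Qi k ys xs x) = 1" using kl h by blast
    thus "PP n Qi k xs ys * (\<Sum>x\<in>blocks q n. Qi k ys xs x * (\<Sum>y\<in>blocks q n. perm_channel n y x))
        = PP n Qi k xs ys"
      by (simp add: perm_channel_sum cong: sum.cong)
  qed
  also have "\<dots> = 1" using Suc by simp
  finally show ?case .
qed

lemma joint_nonneg:
  assumes "valid_encoder q n l Qi" "xs \<in> block_seqs q n l" "ys \<in> block_seqs q n l"
  shows "0 \<le> joint_prob n l Qi xs ys"
  unfolding joint_prob_def
proof (intro prod_nonneg ballI mult_nonneg_nonneg)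
  fix j assume j: "j \<in> {..<l}"
  have "take j ys \<in> block_seqs q n j" "take j xs \<in> block_seqs q n j" "xs ! j \<in> blocks q n"
    using assms(2,3) j by (auto simp: block_seqs_def dest: in_set_takeD)
  thus "0 \<le> Qi j (take j ys) (take j xs) (xs ! j)"
    using assms(1) j unfolding valid_encoder_def by blast
  show "0 \<le> perm_channel n (ys ! j) (xs ! j)" unfolding perm_channel_def by simp
qed

lemma out_nonneg:
  assumes "valid_encoder q n l Qi"
  shows "0 \<le> out_prob q n l Qi E"
  unfolding out_prob_def using joint_nonneg[OF assms]
  by (intro sum_nonneg) auto

lemma out_total:
  assumes "valid_encoder q n l Qi"
  shows "out_prob q n l Qi (block_seqs q n l) = 1"
  using total_mass[OF assms order.refl]
  by (simp add: out_prob_def joint_prob_def PP_def)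

lemma out_split:
  assumes "valid_encoder q n l Qi" "D \<subseteq> block_seqs q n l"
  shows "out_prob q n l Qi (block_seqs q n l - D) + out_prob q n l Qi D = 1"
proof -
  let ?B = "block_seqs q n l"
  have "out_prob q n l Qi (?B - D) + out_prob q n l Qi D
     = (\<Sum>xs\<in>?B. (\<Sum>ys\<in>?B \<inter> (?B - D). joint_prob n l Qi xs ys) + (\<Sum>ys\<in>?B \<inter> D. joint_prob n l Qi xs ys))"
    unfolding out_prob_def sum.distrib ..
  also have "\<dots> = (\<Sum>xs\<in>?B. \<Sum>ys\<in>?B \<inter> ?B. joint_prob n l Qi xs ys)"
  proof (intro sum.cong refl)
    fix xs
    have e: "?B \<inter> ?B = (?B \<inter> (?B - D)) \<union> (?B \<inter> D)" using assms(2) by auto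
    show "(\<Sum>ys\<in>?B \<inter> (?B - D). joint_prob n l Qi xs ys) + (\<Sum>ys\<in>?B \<inter> D. joint_prob n l Qi xs ys)
        = (\<Sum>ys\<in>?B \<inter> ?B. joint_prob n l Qi xs ys)"
      unfolding e by (rule sum.union_disjoint[symmetric]) (auto simp: finite_block_seqs)
  qed
  also have "\<dots> = 1" using out_total[OF assms(1)] unfolding out_prob_def .
  finally show ?thesis .
qed

theorem theorem3:
  fixes q n l M :: nat
    and Q :: "nat \<Rightarrow> nat \<Rightarrow> nat list list \<Rightarrow> nat list list \<Rightarrow> nat list \<Rightarrow> real"
    and D :: "nat \<Rightarrow> nat list list set"
  assumes "q \<ge> 2" and "n \<ge> 1" and "l \<ge> 1"
    and "IDF_code q n l M Q D"
    and "M \<ge> 2 ^ (q ^ (n * l))"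
  shows "type1_error q n l M Q D + type2_error q n l M Q D \<ge> 1"
proof -
  let ?B = "block_seqs q n l"
  let ?op = "\<lambda>i E. out_prob q n l (Q i) E"
  have enc: "valid_encoder q n l (Q i)" "D i \<subseteq> ?B" if "i \<in> {1..M}" for i
    using assms(4) that unfolding IDF_code_def by auto
  have "q ^ (n * l) \<ge> 1" using assms(1) by simp
  hence "(2::nat) ^ (q ^ (n * l)) \<ge> 2 ^ 1" by (intro power_increasing) auto
  hence M2: "M \<ge> 2" using assms(5) by simp
  have t1: "?op i (?B - D i) \<le> type1_error q n l M Q D" if "i \<in> {1..M}" for i
    unfolding type1_error_def using that by (intro Max_ge) auto
  have fin2: "finite {?op i (D j) | i j. i \<in> {1..M} \<and> j \<in> {1..M} \<and> i \<noteq> j}"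
    by (rule finite_subset[of _ "(\<lambda>(i,j). ?op i (D j)) ` ({1..M} \<times> {1..M})"]) auto
  have t2: "?op i (D j) \<le> type2_error q n l M Q D" if "i \<in> {1..M}" "j \<in> {1..M}" "i \<noteq> j" for i j
    unfolding type2_error_def using that by (intro Max_ge[OF fin2]) blast
  show ?thesis
  proof (cases "inj_on D {1..M}")
    case True
    have sub: "D ` {1..M} \<subseteq> Pow ?B" by (metis (no_types, lifting) PowI enc(2) image_subsetI)
    have "card (D ` {1..M}) = M" using True card_image by fastforce
    moreover have "card (Pow ?B) = 2 ^ (q ^ (n * l))"
      using card_Pow[of ?B] card_block_seqs[of q n l] finite_block_seqs by simp
    ultimately have "card (Pow ?B) \<le> card (D ` {1..M})" using assms(5) by simp
    hence "D ` {1..M} = Pow ?B"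
      using card_seteq[OF _ sub] finite_block_seqs by (meson finite_Pow_iff)
    then obtain i where i: "i \<in> {1..M}" "D i = {}" by (metis Pow_bottom imageE)
    have "1 \<le> type1_error q n l M Q D"
      using t1[OF i(1)] out_total[OF enc(1)[OF i(1)]] i(2) by simp
    moreover have "0 \<le> type2_error q n l M Q D"
    proof -
      have m: "1 \<in> {1..M}" "2 \<in> {1..M}" using M2 by auto
      show ?thesis using t2[OF m] out_nonneg[OF enc(1)[OF m(1)], of "D 2"] by simp
    qed
    ultimately show ?thesis by simp
  next
    case False
    then obtain i j where ij: "i \<in> {1..M}" "j \<in> {1..M}" "i \<noteq> j" "D i = D j"
      unfolding inj_on_def by blast
    show ?thesis using t1[OF ij(1)] t2[OF ij(1-3)] ij(4) out_split[OF enc[OF ij(1)]] by simp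
  qed
qed

end
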